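(* Let $\mu,\nu$ be Borel probability measures on $[0,1)$ such that $\mu$ does not charge the boundaries of dyadic intervals ($\mu(\{j2^{-k}\})=0$ for all integers $j,k\ge0$) and $\nu$ is dyadically doubling with constant $D_\nu$: $\nu(\hat I)\le D_\nu\nu(I)$ for $I\in\mathcal{D}\setminus\{[0,1)\}$. Let $\mathcal{T}\subset\mathcal{D}$ be a tree and assume $\mu$ is $(\mathcal{T},D)$-doubling for some $D\ge1$. Then there is a constant $C$ depending only on $D_\nu$ and $D$ such that $$\sum_{I\in\mathcal{T}}\Delta^2_{\mu,\nu}(I)\mu(I) \leq C\Big(\sum_{I\in\mathcal{T}\setminus\mathbf{Leaves}(\mathcal{T})}\alpha^2_{\mu,\nu}(I)\mu(I) + \mu(\mathbf{Top}(\mathcal{T}))\Big).$$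
   Context: $\mathcal{D}$: dyadic intervals $[j2^{-k},(j+1)2^{-k})\subset[0,1)$, $k\ge0$; $\hat I$ is the parent of $I$, and $I_-,I_+$ are the left and right halves (children) of $I$. $\Delta_{\mu,\nu}(I) := |\mu(I_-)/\mu(I) - \nu(I_-)/\nu(I)|$ (with the convention $\Delta_{\mu,\nu}(I)\mu(I):=0$ if $\mu(I)=0$). Wasserstein distance: $\mathbb{W}_1(\nu_1,\nu_2) := \sup_\psi |\int\psi\,d\nu_1 - \int\psi\,d\nu_2|$ over $1$-Lipschitz $\psi\colon\mathbb{R}\to\mathbb{R}$ supported on $[0,1]$; $T_I$ is the increasing affine map from $\overline I$ onto $[0,1]$, $\mu_I := T_{I\sharp}(\mu|_I)/\mu(I)$, $\nu_I := T_{I\sharp}(\nu|_I)/\nu(I)$ (zero if the mass vanishes), $\alpha_{\mu,\nu}(I) := \mathbb{W}_1(\mu_I,\nu_I)$. A tree is a family $\mathcal{T}\subset\mathcal{D}$ that is coherent (if $Q,R\in\mathcal{T}$, $P\in\mathcal{D}$, $Q\subset P\subset R$, then $P\in\mathcal{T}$), has a unique largest element $\mathbf{Top}(\mathcal{T})$, and in which every $I\in\mathcal{T}$ has either $0$ or $2$ of its children in $\mathcal{T}$. $\mathbf{Leaves}(\mathcal{T})$ is the set of $I\in\mathcal{T}$ having no children in $\mathcal{T}$. $\mu$ is $(\mathcal{T},D)$-doubling if $\mu(\hat I)\le D\mu(I)$ for all $I\in\mathcal{T}\setminus\{\mathbf{Top}(\mathcal{T})\}$. *)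

theory Defs
  imports "HOL-Probability.Probability"
begin

text \<open>Dyadic intervals are indexed by pairs (k, j) with j < 2^k, denoting
  the interval [j 2^-k, (j+1) 2^-k).\<close>

definition dyadic :: "(nat \<times> nat) set" where
  "dyadic = {(k, j). j < 2 ^ k}"

fun dy :: "nat \<times> nat \<Rightarrow> real set" where
  "dy (k, j) = {real j / 2 ^ k ..< (real j + 1) / 2 ^ k}"

fun dleft :: "nat \<times> nat \<Rightarrow> nat \<times> nat" where
  "dleft (k, j) = (Suc k, 2 * j)"

fun dright :: "nat \<times> nat \<Rightarrow> nat \<times> nat" where
  "dright (k, j) = (Suc k, 2 * j + 1)"

fun dparent :: "nat \<times> nat \<Rightarrow> nat \<times> nat" where
  "dparent (k, j) = (k - 1, j div 2)"

fun Tmap :: "nat \<times> nat \<Rightarrow> real \<Rightarrow> real" where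
  "Tmap (k, j) x = 2 ^ k * x - real j"

definition is_tree :: "(nat \<times> nat) set \<Rightarrow> bool" where
  "is_tree T \<longleftrightarrow> T \<subseteq> dyadic
     \<and> (\<forall>Q\<in>T. \<forall>R\<in>T. \<forall>P\<in>dyadic. dy Q \<subseteq> dy P \<and> dy P \<subseteq> dy R \<longrightarrow> P \<in> T)
     \<and> (\<exists>!Top\<in>T. \<forall>I\<in>T. dy I \<subseteq> dy Top)
     \<and> (\<forall>I\<in>T. (dleft I \<in> T \<and> dright I \<in> T) \<or> (dleft I \<notin> T \<and> dright I \<notin> T))"

definition tree_top :: "(nat \<times> nat) set \<Rightarrow> nat \<times> nat" where
  "tree_top T = (THE Top. Top \<in> T \<and> (\<forall>I\<in>T. dy I \<subseteq> dy Top))"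

definition leaves :: "(nat \<times> nat) set \<Rightarrow> (nat \<times> nat) set" where
  "leaves T = {I \<in> T. dleft I \<notin> T \<and> dright I \<notin> T}"

definition tree_doubling :: "(nat \<times> nat) set \<Rightarrow> real \<Rightarrow> real measure \<Rightarrow> bool" where
  "tree_doubling T D \<mu> \<longleftrightarrow>
     (\<forall>I\<in>T - {tree_top T}. measure \<mu> (dy (dparent I)) \<le> D * measure \<mu> (dy I))"

definition dyadic_doubling :: "real \<Rightarrow> real measure \<Rightarrow> bool" where
  "dyadic_doubling D \<nu> \<longleftrightarrow>
     (\<forall>I\<in>dyadic - {(0, 0)}. measure \<nu> (dy (dparent I)) \<le> D * measure \<nu> (dy I))"

text \<open>Delta; note x / 0 = 0 in Isabelle, so Delta^2 * mu(I) = 0 when mu(I) = 0.\<close>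
definition Delta :: "real measure \<Rightarrow> real measure \<Rightarrow> nat \<times> nat \<Rightarrow> real" where
  "Delta \<mu> \<nu> I = \<bar>measure \<mu> (dy (dleft I)) / measure \<mu> (dy I)
                   - measure \<nu> (dy (dleft I)) / measure \<nu> (dy I)\<bar>"

text \<open>Normalized push-forward of the restriction of a measure to I
  (the zero measure if the mass of I vanishes).\<close>
definition blowup :: "real measure \<Rightarrow> nat \<times> nat \<Rightarrow> real measure" where
  "blowup \<mu> I = distr (density \<mu> (\<lambda>x. ennreal (indicator (dy I) x / measure \<mu> (dy I))))
                      borel (Tmap I)"

definition W1 :: "real measure \<Rightarrow> real measure \<Rightarrow> real" where
  "W1 \<nu>1 \<nu>2 = (SUP \<psi> \<in> {\<psi> :: real \<Rightarrow> real. 1-lipschitz_on UNIV \<psi> \<and> (\<forall>x. x \<notin> {0..1} \<longrightarrow> \<psi> x = 0)}.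
                 \<bar>integral\<^sup>L \<nu>1 \<psi> - integral\<^sup>L \<nu>2 \<psi>\<bar>)"

definition alpha :: "real measure \<Rightarrow> real measure \<Rightarrow> nat \<times> nat \<Rightarrow> real" where
  "alpha \<mu> \<nu> I = W1 (blowup \<mu> I) (blowup \<nu> I)"

end

theory Submission
  imports Defs
begin



lemma mem_dy: "x \<in> dy (k,j) \<longleftrightarrow> \<lfloor>2^k * x\<rfloor> = int j"
proof -
  have p: "(0::real) < 2^k" by simp
  have "x \<in> dy (k,j) \<longleftrightarrow> real j \<le> 2^k * x \<and> 2^k*x < real j + 1"
    using p by (simp add: divide_le_eq less_divide_eq mult.commute)
  thus ?thesis by (simp add: floor_eq_iff)
qed

lemma floor_level: "k \<le> k' \<Longrightarrow> \<lfloor>2^k * x\<rfloor> = \<lfloor>2^k' * (x::real)\<rfloor> div 2^(k'-k)"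
proof -
  assume "k \<le> k'"
  then have e: "(2::real)^k' = 2^k * 2^(k'-k)" by (simp add: power_add[symmetric])
  have "2^k * x = (2^k' * x) / real_of_int (2^(k'-k))" using e by simp
  hence "\<lfloor>2^k * x\<rfloor> = \<lfloor>(2^k' * x) / real_of_int (2^(k'-k))\<rfloor>" by simp
  also have "\<dots> = \<lfloor>2^k' * x\<rfloor> div 2^(k'-k)" by (rule floor_divide_real_eq_div) simp
  finally show ?thesis .
qed

lemma dy_sub: "k \<le> k' \<Longrightarrow> j' div 2^(k'-k) = j \<Longrightarrow> dy (k',j') \<subseteq> dy (k,j)"
proof
  fix y assume a: "k \<le> k'" "j' div 2^(k'-k) = j" and y: "y \<in> dy (k',j')"
  have "\<lfloor>2^k * y\<rfloor> = int j' div 2^(k'-k)" using floor_level[OF a(1)] y mem_dy by simp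
  also have "\<dots> = int (j' div 2^(k'-k))" by (simp add: zdiv_int)
  also have "\<dots> = int j" using a(2) by simp
  finally show "y \<in> dy (k,j)" using mem_dy by simp
qed

lemma dy_meet: "k \<le> k' \<Longrightarrow> x \<in> dy (k,j) \<Longrightarrow> x \<in> dy (k',j') \<Longrightarrow> j' div 2^(k'-k) = j"
proof -
  assume a: "k \<le> k'" "x \<in> dy (k,j)" "x \<in> dy (k',j')"
  have "int j = int j' div 2^(k'-k)" using floor_level[OF a(1), of x] a(2,3) mem_dy by simp
  also have "int j' div 2^(k'-k) = int (j' div 2^(k'-k))" by (simp add: zdiv_int)
  finally show ?thesis by linarith
qed

lemma dy_nonempty: "real j / 2^k \<in> dy (k,j)"
  by (simp add: divide_strict_right_mono)

lemma dy_split: "dy I = dy (dleft I) \<union> dy (dright I)"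
proof -
  obtain k j where I: "I = (k,j)" by fastforce
  have "x \<in> dy (k,j) \<longleftrightarrow> x \<in> dy (Suc k, 2*j) \<or> x \<in> dy (Suc k, 2*j+1)" for x
  proof -
    have "\<lfloor>2^k * x\<rfloor> = \<lfloor>2^Suc k * x\<rfloor> div 2" using floor_level[of k "Suc k" x] by simp
    moreover have "(n::int) div 2 = int j \<longleftrightarrow> n = int (2*j) \<or> n = int (2*j+1)" for n by presburger
    ultimately show ?thesis unfolding mem_dy by metis
  qed
  hence "dy (k,j) = dy (Suc k, 2*j) \<union> dy (Suc k, 2*j+1)" by blast
  thus ?thesis unfolding I dleft.simps dright.simps .
qed

lemma dy_disj_children: "dy (dleft I) \<inter> dy (dright I) = {}"
proof -
  obtain k j where I: "I = (k,j)" by fastforce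
  have "x \<notin> dy (Suc k, 2*j) \<inter> dy (Suc k, 2*j+1)" for x
    using dy_meet[of "Suc k" "Suc k" x "2*j" "2*j+1"] by auto
  hence "dy (Suc k, 2*j) \<inter> dy (Suc k, 2*j+1) = {}" by blast
  thus ?thesis unfolding I dleft.simps dright.simps .
qed

lemma dy_child_sub: "dy (dleft I) \<subseteq> dy I" "dy (dright I) \<subseteq> dy I"
  using dy_split[of I] by blast+

lemma Tmap_meas: "Tmap J \<in> borel_measurable borel"
proof -
  obtain k j where J: "J = (k,j)" by fastforce
  have e: "Tmap (k,j) = (\<lambda>x. 2^k*x - real j)" by (rule ext) simp
  have "(\<lambda>x. 2^k*x - real j) \<in> borel_measurable borel" by measurable
  thus ?thesis using J e by metis
qed




lemma dy_borel: "dy I \<in> sets borel"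
proof -
  obtain k j where "I = (k,j)" by fastforce
  thus ?thesis by (simp add: atLeastLessThan_borel del: dy.simps) (simp add: atLeastLessThan_borel)
qed

lemma tree_top_props:
  assumes "is_tree T"
  shows "tree_top T \<in> T" "\<forall>I\<in>T. dy I \<subseteq> dy (tree_top T)"
proof -
  have ex: "\<exists>!Top. Top \<in> T \<and> (\<forall>I\<in>T. dy I \<subseteq> dy Top)" using assms unfolding is_tree_def by blast
  have "tree_top T \<in> T \<and> (\<forall>I\<in>T. dy I \<subseteq> dy (tree_top T))"
    unfolding tree_top_def by (rule theI'[OF ex])
  thus "tree_top T \<in> T" "\<forall>I\<in>T. dy I \<subseteq> dy (tree_top T)" by auto
qed

lemma div_pow_less: "j < 2^k \<Longrightarrow> m \<le> k \<Longrightarrow> (j::nat) div 2^(k-m) < 2^m"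
proof -
  assume a: "j < 2^k" "m \<le> k"
  have "(2::nat)^m * 2^(k-m) = 2^k" using a(2) by (simp add: power_add[symmetric])
  thus ?thesis using a(1) by (simp add: div_less_iff_less_mult)
qed

lemma leaf_nest_false:
  assumes tr: "is_tree T" and L1: "(k1,j1) \<in> leaves T" and L2: "(k2,j2) \<in> T"
    and ne: "(k1,j1) \<noteq> (k2,j2)" and le: "k1 \<le> k2"
    and x1: "x \<in> dy (k1,j1)" and x2: "x \<in> dy (k2,j2)"
  shows False
proof -
  have m: "j2 div 2^(k2-k1) = j1" using dy_meet[OF le x1 x2] .
  have sub: "T \<subseteq> dyadic" and coh: "\<forall>Q\<in>T. \<forall>R\<in>T. \<forall>P\<in>dyadic. dy Q \<subseteq> dy P \<and> dy P \<subseteq> dy R \<longrightarrow> P \<in> T"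
    using tr unfolding is_tree_def by blast+
  have L1T: "(k1,j1) \<in> T" and nl: "dleft (k1,j1) \<notin> T" "dright (k1,j1) \<notin> T"
    using L1 unfolding leaves_def by auto
  show False
  proof (cases "k1 = k2")
    case True
    then show False using m ne by simp
  next
    case False
    then have lt: "Suc k1 \<le> k2" using le by simp
    define n where "n = j2 div 2^(k2 - Suc k1)"
    have j2: "j2 < 2^k2" using L2 sub unfolding dyadic_def by auto
    have Pd: "(Suc k1, n) \<in> dyadic" unfolding dyadic_def n_def using div_pow_less[OF j2 lt] by simp
    have s1: "dy (k2,j2) \<subseteq> dy (Suc k1, n)" using dy_sub[OF lt] n_def by simp
    have "n div 2 = j2 div (2^(k2 - Suc k1) * 2)" unfolding n_def by (simp add: div_mult2_eq)
    also have "2^(k2 - Suc k1) * 2 = (2::nat)^(k2-k1)" using lt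
      by (metis Suc_diff_Suc Suc_le_lessD power_Suc2)
    finally have nd: "n div 2 = j1" using m by simp
    have s2: "dy (Suc k1, n) \<subseteq> dy (k1, j1)" using dy_sub[of k1 "Suc k1" n j1] nd by simp
    have "(Suc k1, n) \<in> T" using coh L2 L1T Pd s1 s2 by blast
    moreover have "n = 2*j1 \<or> n = 2*j1+1" using nd by presburger
    ultimately show False using nl by auto
  qed
qed

lemma leaves_disj:
  assumes tr: "is_tree T" and L1: "L1 \<in> leaves T" and L2: "L2 \<in> leaves T" and ne: "L1 \<noteq> L2"
  shows "dy L1 \<inter> dy L2 = {}"
proof (rule ccontr)
  assume "dy L1 \<inter> dy L2 \<noteq> {}"
  then obtain x where x: "x \<in> dy L1" "x \<in> dy L2" by blast
  obtain k1 j1 where e1: "L1 = (k1,j1)" by fastforce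
  obtain k2 j2 where e2: "L2 = (k2,j2)" by fastforce
  have T1: "L1 \<in> T" "L2 \<in> T" using L1 L2 unfolding leaves_def by auto
  show False
  proof (cases "k1 \<le> k2")
    case True
    show False using leaf_nest_false[OF tr L1[unfolded e1] T1(2)[unfolded e2] ne[unfolded e1 e2] True]
      x e1 e2 by simp
  next
    case False
    show False using leaf_nest_false[OF tr L2[unfolded e2] T1(1)[unfolded e1] ne[unfolded e1 e2, symmetric]]
      False x e1 e2 by simp
  qed
qed

lemma disj_sum_le:
  assumes fm: "finite_measure M" and sM: "sets M = sets borel"
    and F: "\<And>I. I \<in> F \<Longrightarrow> dy I \<subseteq> S" and dj: "disjoint_family_on dy F" and S: "S \<in> sets borel"
  shows "(\<Sum>\<^sub>\<infinity>I\<in>F. ennreal (measure M (dy I))) \<le> ennreal (measure M S)"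
proof (rule infsum_le_finite_sums)
  show "(\<lambda>I. ennreal (measure M (dy I))) summable_on F" by (rule nonneg_summable_on_complete) simp
  fix G assume G: "finite G" "G \<subseteq> F"
  have "(\<Sum>I\<in>G. ennreal (measure M (dy I))) = (\<Sum>I\<in>G. emeasure M (dy I))"
    using finite_measure.emeasure_eq_measure[OF fm] by simp
  also have "\<dots> = emeasure M (\<Union>I\<in>G. dy I)"
    by (rule sum_emeasure) (use G disjoint_family_on_mono[OF G(2) dj] sM dy_borel in auto)
  also have "\<dots> \<le> emeasure M S"
    by (rule emeasure_mono) (use G F S sM in auto)
  also have "\<dots> = ennreal (measure M S)" using finite_measure.emeasure_eq_measure[OF fm] by simp
  finally show "(\<Sum>I\<in>G. ennreal (measure M (dy I))) \<le> ennreal (measure M S)" .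
qed




definition tent :: "real \<Rightarrow> real" where "tent x = max 0 (min x (1 - x))"
definition psi :: "real \<Rightarrow> real" where
  "psi x = (if x < 1/2 then - tent (2*x) / 2 else tent (2*x - 1) / 2)"
definition PP :: "real measure \<Rightarrow> nat \<times> nat \<Rightarrow> (real \<Rightarrow> real) \<Rightarrow> real" where
  "PP \<rho> J g = integral\<^sup>L \<rho> (\<lambda>x. indicator (dy J) x * g (Tmap J x))"
definition PS :: "(real \<Rightarrow> real) set" where
  "PS = {\<psi> :: real \<Rightarrow> real. 1-lipschitz_on UNIV \<psi> \<and> (\<forall>x. x \<notin> {0..1} \<longrightarrow> \<psi> x = 0)}"

declare dy_borel[measurable]

lemma meas_rho: "sets \<rho> = sets borel \<Longrightarrow> f \<in> borel_measurable borel \<Longrightarrow> f \<in> borel_measurable \<rho>"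
proof -
  assume s: "sets \<rho> = sets borel" and f: "f \<in> borel_measurable borel"
  show ?thesis by (subst measurable_cong_sets[OF s refl]) (rule f)
qed

lemma ind_comp_meas: fixes g :: "real \<Rightarrow> real" shows "g \<in> borel_measurable borel \<Longrightarrow>
   (\<lambda>x. indicator (dy J) x * g (Tmap J x)) \<in> borel_measurable borel"
proof -
  assume g: "g \<in> borel_measurable borel"
  have "(\<lambda>x. g (Tmap J x)) \<in> borel_measurable borel"
    using measurable_comp[OF Tmap_meas g] by (simp add: comp_def)
  thus ?thesis by measurable
qed

lemma blowup_integral:
  fixes g :: "real \<Rightarrow> real"
  assumes s: "sets \<rho> = sets borel" and g: "g \<in> borel_measurable borel"
  shows "integral\<^sup>L (blowup \<rho> J) g = PP \<rho> J g / measure \<rho> (dy J)"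
proof -
  define h where "h x = indicator (dy J) x / measure \<rho> (dy J)" for x
  have "h \<in> borel_measurable borel" unfolding h_def by measurable
  hence hm: "h \<in> borel_measurable \<rho>" using meas_rho[OF s] by blast
  have Tm: "Tmap J \<in> measurable (density \<rho> (\<lambda>x. ennreal (h x))) borel"
    using measurable_cong_sets[of "density \<rho> (\<lambda>x. ennreal (h x))" borel borel borel] Tmap_meas s by simp
  have "integral\<^sup>L (blowup \<rho> J) g = integral\<^sup>L (density \<rho> (\<lambda>x. ennreal (h x))) (\<lambda>x. g (Tmap J x))"
    unfolding blowup_def h_def[symmetric] by (rule integral_distr[OF Tm g])
  also have "\<dots> = integral\<^sup>L \<rho> (\<lambda>x. h x *\<^sub>R g (Tmap J x))"
  proof (rule integral_density)
    show "(\<lambda>x. g (Tmap J x)) \<in> borel_measurable \<rho>"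
      proof -
      have "(\<lambda>x. g (Tmap J x)) \<in> borel_measurable borel"
        using measurable_comp[OF Tmap_meas g] by (simp add: comp_def)
      thus ?thesis by (rule meas_rho[OF s])
    qed
    show "h \<in> borel_measurable \<rho>" by (rule hm)
    show "AE x in \<rho>. 0 \<le> h x" unfolding h_def by simp
  qed
  also have "\<dots> = integral\<^sup>L \<rho> (\<lambda>x. indicator (dy J) x * g (Tmap J x) / measure \<rho> (dy J))"
    by (rule Bochner_Integration.integral_cong) (simp_all add: h_def)
  also have "\<dots> = PP \<rho> J g / measure \<rho> (dy J)" unfolding PP_def by (rule integral_divide_zero)
  finally show ?thesis .
qed

lemma PP_integrable:
  fixes g :: "real \<Rightarrow> real"
  assumes fm: "finite_measure \<rho>" and s: "sets \<rho> = sets borel" and g: "g \<in> borel_measurable borel"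
    and b: "\<And>x. \<bar>g x\<bar> \<le> B"
  shows "integrable \<rho> (\<lambda>x. indicator (dy J) x * g (Tmap J x))"
proof (rule finite_measure.integrable_const_bound[OF fm])
  show "AE x in \<rho>. norm (indicator (dy J) x * g (Tmap J x)) \<le> B"
  proof (rule AE_I2)
    fix x
    have "\<bar>indicator (dy J) x * g (Tmap J x)\<bar> \<le> \<bar>g (Tmap J x)\<bar>"
      by (simp add: indicator_def abs_mult)
    thus "norm (indicator (dy J) x * g (Tmap J x)) \<le> B" using b[of "Tmap J x"] by simp
  qed
  show "(\<lambda>x. indicator (dy J) x * g (Tmap J x)) \<in> borel_measurable \<rho>"
    using meas_rho[OF s ind_comp_meas[OF g]] .
qed

lemma space_rho: "sets \<rho> = sets borel \<Longrightarrow> space \<rho> = (UNIV::real set)"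
  using sets_eq_imp_space_eq by fastforce

lemma ind_integrable:
  assumes fm: "finite_measure \<rho>" and s: "sets \<rho> = sets borel"
  shows "integrable \<rho> (\<lambda>x. c * indicator (dy J) x :: real)"
proof -
  have "integrable \<rho> (indicator (dy J) :: real \<Rightarrow> real)"
    using s dy_borel finite_measure.emeasure_finite[OF fm] by (intro integrable_real_indicator) (auto simp: top.not_eq_extremum)
  thus ?thesis by simp
qed

lemma integral_ind:
  fixes \<rho> :: "real measure"
  assumes s: "sets \<rho> = sets borel"
  shows "integral\<^sup>L \<rho> (\<lambda>x. c * indicator A x :: real) = c * measure \<rho> A"
  using space_rho[OF s] by simp

lemma PP_bounds:
  fixes g :: "real \<Rightarrow> real"
  assumes fm: "finite_measure \<rho>" and s: "sets \<rho> = sets borel" and g: "g \<in> borel_measurable borel"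
    and b: "\<And>t. lo \<le> g t \<and> g t \<le> hi" and lohi: "lo \<le> 0" "0 \<le> hi"
  shows "lo * measure \<rho> (dy J) \<le> PP \<rho> J g \<and> PP \<rho> J g \<le> hi * measure \<rho> (dy J)"
proof -
  have bb: "\<bar>g t\<bar> \<le> \<bar>lo\<bar> + \<bar>hi\<bar>" for t using b[of t] by linarith
  note i1 = PP_integrable[OF fm s g bb, of J]
  have "integral\<^sup>L \<rho> (\<lambda>x. lo * indicator (dy J) x) \<le> PP \<rho> J g"
    unfolding PP_def
  proof (rule integral_mono[OF ind_integrable[OF fm s] i1])
    fix x show "lo * indicator (dy J) x \<le> indicator (dy J) x * g (Tmap J x)"
      using b[of "Tmap J x"] by (auto simp: indicator_def)
  qed
  moreover have "PP \<rho> J g \<le> integral\<^sup>L \<rho> (\<lambda>x. hi * indicator (dy J) x)"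
    unfolding PP_def
  proof (rule integral_mono[OF i1 ind_integrable[OF fm s]])
    fix x show "indicator (dy J) x * g (Tmap J x) \<le> hi * indicator (dy J) x"
      using b[of "Tmap J x"] by (auto simp: indicator_def)
  qed
  ultimately show ?thesis using space_rho[OF s] by simp
qed

lemma tent_bounds: "0 \<le> tent t \<and> tent t \<le> 1"
  unfolding tent_def by simp

lemma tent_lip: "1-lipschitz_on UNIV tent"
  by (rule lipschitz_onI) (auto simp: tent_def dist_real_def max_def min_def abs_if)

lemma psi_lip: "1-lipschitz_on UNIV psi"
proof (rule lipschitz_onI)
  have tl: "\<bar>tent a - tent b\<bar> \<le> \<bar>a - b\<bar>" for a b
    using lipschitz_onD[OF tent_lip, of a b] by (simp add: dist_real_def)
  have t1: "0 \<le> tent z" "tent z \<le> 1 - z" if "z \<le> 1" for z using that unfolding tent_def by auto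
  have t2: "0 \<le> tent z" "tent z \<le> z" if "0 \<le> z" for z using that unfolding tent_def by auto
  have key: "\<bar>psi x - psi y\<bar> \<le> \<bar>x - y\<bar>" if xy: "x \<le> y" for x y
  proof (cases "y < 1/2")
    case True
    hence "x < 1/2" using xy by simp
    thus ?thesis using True tl[of "2*x" "2*y"] unfolding psi_def by simp
  next
    case False
    show ?thesis
    proof (cases "x < 1/2")
      case True
      have "psi x = - tent (2*x) / 2" "psi y = tent (2*y-1)/2" using True False unfolding psi_def by auto
      moreover have "0 \<le> tent (2*x)" "tent (2*x) \<le> 1 - 2*x" using t1[of "2*x"] True by auto
      moreover have "0 \<le> tent (2*y-1)" "tent (2*y-1) \<le> 2*y-1" using t2[of "2*y-1"] False by auto
      ultimately show ?thesis using xy by (simp add: abs_if)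
    next
      case False2: False
      thus ?thesis using False tl[of "2*x-1" "2*y-1"] unfolding psi_def by simp
    qed
  qed
  fix x y :: real
  show "dist (psi x) (psi y) \<le> 1 * dist x y"
    using key[of x y] key[of y x] by (cases "x \<le> y") (auto simp: dist_real_def abs_minus_commute)
qed simp

lemma tent_PS: "tent \<in> PS"
  unfolding PS_def using tent_lip by (auto simp: tent_def)

lemma psi_PS: "psi \<in> PS"
  unfolding PS_def using psi_lip by (auto simp: psi_def tent_def)

lemma PS_meas: "\<psi> \<in> PS \<Longrightarrow> \<psi> \<in> borel_measurable borel"
  unfolding PS_def by (auto intro: borel_measurable_continuous_onI lipschitz_on_continuous_on)

lemma PS_bound: "\<psi> \<in> PS \<Longrightarrow> \<bar>\<psi> x\<bar> \<le> 2"
proof -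
  assume p: "\<psi> \<in> PS"
  hence l: "1-lipschitz_on UNIV \<psi>" and z: "\<And>x. x \<notin> {0..1} \<Longrightarrow> \<psi> x = 0" unfolding PS_def by auto
  show ?thesis
  proof (cases "x \<in> {0..1}")
    case True
    have "dist (\<psi> x) (\<psi> (-1)) \<le> 1 * dist x (-1)" by (rule lipschitz_onD[OF l]) auto
    moreover have "\<psi> (-1) = 0" using z by simp
    ultimately show ?thesis using True by (simp add: dist_real_def)
  next
    case False thus ?thesis using z by simp
  qed
qed

lemma blowup_abs_le:
  fixes g :: "real \<Rightarrow> real"
  assumes fm: "finite_measure \<rho>" and s: "sets \<rho> = sets borel" and g: "g \<in> borel_measurable borel"
    and b: "\<And>t. \<bar>g t\<bar> \<le> B"
  shows "\<bar>integral\<^sup>L (blowup \<rho> J) g\<bar> \<le> B"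
proof -
  have B0: "0 \<le> B" using b[of 0] by linarith
  have b2: "-B \<le> g t \<and> g t \<le> B" for t using b[of t] by linarith
  note pb = PP_bounds[OF fm s g b2, of J] B0
  have m0: "0 \<le> measure \<rho> (dy J)" by simp
  show ?thesis
  proof (cases "measure \<rho> (dy J) = 0")
    case True thus ?thesis using blowup_integral[OF s g] B0 by simp
  next
    case False
    hence mp: "0 < measure \<rho> (dy J)" using m0 by linarith
    have "\<bar>PP \<rho> J g\<bar> \<le> B * measure \<rho> (dy J)" using pb by auto
    hence "\<bar>PP \<rho> J g / measure \<rho> (dy J)\<bar> \<le> B" using mp by (simp add: abs_div divide_le_eq)
    thus ?thesis using blowup_integral[OF s g] by simp
  qed
qed

definition Wset :: "real measure \<Rightarrow> real measure \<Rightarrow> nat \<times> nat \<Rightarrow> (real \<Rightarrow> real) \<Rightarrow> real" where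
  "Wset \<mu> \<nu> J \<psi> = \<bar>integral\<^sup>L (blowup \<mu> J) \<psi> - integral\<^sup>L (blowup \<nu> J) \<psi>\<bar>"

lemma alpha_eq: "alpha \<mu> \<nu> J = (SUP \<psi>\<in>PS. Wset \<mu> \<nu> J \<psi>)"
  unfolding alpha_def W1_def PS_def Wset_def ..

lemma Wset_le4:
  assumes "finite_measure \<mu>" "sets \<mu> = sets borel" "finite_measure \<nu>" "sets \<nu> = sets borel" "\<psi> \<in> PS"
  shows "Wset \<mu> \<nu> J \<psi> \<le> 4"
proof -
  have "\<bar>integral\<^sup>L (blowup \<mu> J) \<psi>\<bar> \<le> 2"
    by (rule blowup_abs_le) (use assms PS_meas PS_bound in auto)
  moreover have "\<bar>integral\<^sup>L (blowup \<nu> J) \<psi>\<bar> \<le> 2"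
    by (rule blowup_abs_le) (use assms PS_meas PS_bound in auto)
  ultimately show ?thesis unfolding Wset_def by linarith
qed

lemma alpha_props:
  assumes "finite_measure \<mu>" "sets \<mu> = sets borel" "finite_measure \<nu>" "sets \<nu> = sets borel"
  shows "\<And>\<psi>. \<psi> \<in> PS \<Longrightarrow> Wset \<mu> \<nu> J \<psi> \<le> alpha \<mu> \<nu> J"
    and "0 \<le> alpha \<mu> \<nu> J" and "alpha \<mu> \<nu> J \<le> 4"
proof -
  have bdd: "bdd_above (Wset \<mu> \<nu> J ` PS)"
    by (rule bdd_aboveI[where M=4]) (auto intro: Wset_le4[OF assms])
  show up: "\<And>\<psi>. \<psi> \<in> PS \<Longrightarrow> Wset \<mu> \<nu> J \<psi> \<le> alpha \<mu> \<nu> J"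
    unfolding alpha_eq using bdd by (rule cSUP_upper[rotated])
  show "0 \<le> alpha \<mu> \<nu> J" using up[OF tent_PS] unfolding Wset_def by linarith
  show "alpha \<mu> \<nu> J \<le> 4" unfolding alpha_eq
    using Wset_le4[OF assms] tent_PS by (intro cSUP_least) auto
qed




lemma sq3: "((x::real) + y + z)\<^sup>2 \<le> 3 * (x\<^sup>2 + y\<^sup>2 + z\<^sup>2)"
proof -
  have e: "3 * (x\<^sup>2 + y\<^sup>2 + z\<^sup>2) - (x + y + z)\<^sup>2 = (x-y)\<^sup>2 + (y-z)\<^sup>2 + (x-z)\<^sup>2"
    by (simp add: power2_eq_square algebra_simps)
  have "0 \<le> (x-y)\<^sup>2 + (y-z)\<^sup>2 + (x-z)\<^sup>2" by simp
  thus ?thesis using e by linarith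
qed

lemma alg:
  fixes M Mm Mp N Nm Np Pm Pp Qm Qp al alm alp c :: real
  assumes M: "M = Mm + Mp" "0 \<le> Mm" "0 \<le> Mp" and N: "N = Nm + Np" "0 < Nm" "0 < Np"
    and P: "0 \<le> Pm" "Pm \<le> Mm" "0 \<le> Pp" "Pp \<le> Mp"
    and Q: "c * Nm \<le> Qm" "c * Np \<le> Qp" and c: "0 < c"
    and h0: "\<bar>(- Pm / 2 + Pp / 2) / M - (- Qm / 2 + Qp / 2) / N\<bar> \<le> al"
    and hm: "\<bar>Pm / Mm - Qm / Nm\<bar> \<le> alm" and hp: "\<bar>Pp / Mp - Qp / Np\<bar> \<le> alp"
  shows "(\<bar>Mm / M - Nm / N\<bar>)\<^sup>2 * M \<le> (4 * al\<^sup>2 * M + alm\<^sup>2 * Mm + alp\<^sup>2 * Mp) / c\<^sup>2"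
proof (cases "M = 0")
  case True
  then show ?thesis using M by (simp add: divide_nonneg_pos)
next
  case False
  hence Mp0: "0 < M" using M by simp
  have N0: "0 < N" using N by simp
  define a where "a = Mm / M"
  define b where "b = Nm / N"
  define p where "p = Pm / Mm"
  define q where "q = Qm / Nm"
  define p' where "p' = Pp / Mp"
  define q' where "q' = Qp / Np"
  have a01: "0 \<le> a" "a \<le> 1" using M Mp0 unfolding a_def by (auto simp: divide_le_eq)
  have a1: "1 - a = Mp / M" using M Mp0 unfolding a_def by (simp add: field_simps)
  have b1: "1 - b = Np / N" using N N0 unfolding b_def by (simp add: field_simps)
  have e1: "Pm / M = a * p"
  proof (cases "Mm = 0")
    case True thus ?thesis using P unfolding a_def p_def by simp
  next
    case False thus ?thesis unfolding a_def p_def by simp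
  qed
  have e2: "Pp / M = (1 - a) * p'"
  proof (cases "Mp = 0")
    case True thus ?thesis using P unfolding a1 p'_def by simp
  next
    case False thus ?thesis unfolding a1 p'_def by simp
  qed
  have e3: "Qm / N = b * q" unfolding b_def q_def using N by simp
  have e4: "Qp / N = (1 - b) * q'" unfolding b1 q'_def using N by simp
  define X where "X = - a * p + (1 - a) * p' + b * q - (1 - b) * q'"
  have hX: "\<bar>X\<bar> \<le> 2 * al"
  proof -
    have "(- Pm / 2 + Pp / 2) / M - (- Qm / 2 + Qp / 2) / N = (-(Pm/M) + Pp/M - (-(Qm/N) + Qp/N))/2"
      by (simp add: add_divide_distrib diff_divide_distrib)
    also have "\<dots> = X / 2" unfolding e1 e2 e3 e4 X_def by simp
    finally have "(- Pm / 2 + Pp / 2) / M - (- Qm / 2 + Qp / 2) / N = X / 2" .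
    hence "\<bar>X / 2\<bar> \<le> al" using h0 by (simp only:)
    thus ?thesis by simp
  qed
  have idt: "(a - b) * (q + q') = - X - a * (p - q) + (1 - a) * (p' - q')"
    unfolding X_def by (simp add: algebra_simps)
  have qq: "2 * c \<le> q + q'"
  proof -
    have "c \<le> q" unfolding q_def using Q N by (simp add: le_divide_eq)
    moreover have "c \<le> q'" unfolding q'_def using Q N by (simp add: le_divide_eq)
    ultimately show ?thesis by simp
  qed
  have al0: "0 \<le> alm" "0 \<le> alp" "0 \<le> al" using hm hp hX by auto
  have t1: "\<bar>a * (p - q)\<bar> \<le> a * alm" using hm a01 unfolding p_def q_def
    by (simp add: abs_mult mult_left_mono)
  have t2: "\<bar>(1 - a) * (p' - q')\<bar> \<le> (1 - a) * alp" using hp a01 unfolding p'_def q'_def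
    by (simp add: abs_mult mult_left_mono)
  define S where "S = 2 * al + a * alm + (1 - a) * alp"
  have S0: "0 \<le> S" unfolding S_def using al0 a01 by simp
  have "\<bar>a - b\<bar> * (q + q') \<le> S"
  proof -
    have "\<bar>a - b\<bar> * (q + q') = \<bar>(a - b) * (q + q')\<bar>" using qq c by (simp add: abs_mult)
    also have "\<dots> \<le> \<bar>X\<bar> + \<bar>a * (p - q)\<bar> + \<bar>(1 - a) * (p' - q')\<bar>" unfolding idt by linarith
    finally show ?thesis unfolding S_def using hX t1 t2 by linarith
  qed
  hence "\<bar>a - b\<bar> * (2 * c) \<le> S"
    using qq by (meson abs_ge_zero mult_left_mono order_trans)
  hence ab: "\<bar>a - b\<bar> \<le> S / (2 * c)" using c by (simp add: le_divide_eq)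
  have "(\<bar>a - b\<bar>)\<^sup>2 \<le> (S / (2 * c))\<^sup>2" using ab by (intro power_mono) auto
  also have "\<dots> = S\<^sup>2 / (4 * c\<^sup>2)" by (simp add: power_divide power_mult_distrib)
  also have "S\<^sup>2 \<le> 3 * (4 * al\<^sup>2 + a\<^sup>2 * alm\<^sup>2 + (1 - a)\<^sup>2 * alp\<^sup>2)"
  proof -
    have "S\<^sup>2 \<le> 3 * ((2*al)\<^sup>2 + (a*alm)\<^sup>2 + ((1-a)*alp)\<^sup>2)" unfolding S_def
      by (rule sq3)
    thus ?thesis by (simp add: power_mult_distrib)
  qed
  hence "S\<^sup>2 / (4 * c\<^sup>2) \<le> 3 * (4 * al\<^sup>2 + a\<^sup>2 * alm\<^sup>2 + (1 - a)\<^sup>2 * alp\<^sup>2) / (4 * c\<^sup>2)"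
    using c by (simp add: divide_right_mono)
  finally have sq: "(\<bar>a - b\<bar>)\<^sup>2 \<le> 3 * (4 * al\<^sup>2 + a\<^sup>2 * alm\<^sup>2 + (1 - a)\<^sup>2 * alp\<^sup>2) / (4 * c\<^sup>2)" .
  have am: "a\<^sup>2 * M \<le> Mm"
  proof -
    have "a\<^sup>2 * M = a * Mm" unfolding a_def using Mp0 by (simp add: power2_eq_square)
    also have "\<dots> \<le> Mm" using a01 M by (simp add: mult_left_le_one_le)
    finally show ?thesis .
  qed
  have ap: "(1 - a)\<^sup>2 * M \<le> Mp"
  proof -
    have "(1 - a)\<^sup>2 * M = (1 - a) * Mp" unfolding a1 using Mp0 by (simp add: power2_eq_square)
    also have "\<dots> \<le> Mp" using a01 M by (simp add: mult_left_le_one_le)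
    finally show ?thesis .
  qed
  have "(\<bar>a - b\<bar>)\<^sup>2 * M \<le> 3 * (4 * al\<^sup>2 + a\<^sup>2 * alm\<^sup>2 + (1 - a)\<^sup>2 * alp\<^sup>2) / (4 * c\<^sup>2) * M"
    using mult_right_mono[OF sq, of M] Mp0 by simp
  also have "\<dots> = 3 * (4 * al\<^sup>2 * M + alm\<^sup>2 * (a\<^sup>2 * M) + alp\<^sup>2 * ((1 - a)\<^sup>2 * M)) / (4 * c\<^sup>2)"
    by (simp add: algebra_simps)
  also have "\<dots> \<le> 3 * (4 * al\<^sup>2 * M + alm\<^sup>2 * Mm + alp\<^sup>2 * Mp) / (4 * c\<^sup>2)"
  proof -
    have "alm\<^sup>2 * (a\<^sup>2 * M) \<le> alm\<^sup>2 * Mm" using am by (simp add: mult_left_mono)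
    moreover have "alp\<^sup>2 * ((1 - a)\<^sup>2 * M) \<le> alp\<^sup>2 * Mp" using ap by (simp add: mult_left_mono)
    ultimately show ?thesis using c by (intro divide_right_mono) auto
  qed
  also have "\<dots> \<le> (4 * al\<^sup>2 * M + alm\<^sup>2 * Mm + alp\<^sup>2 * Mp) / c\<^sup>2"
  proof -
    have R0: "0 \<le> 4 * al\<^sup>2 * M + alm\<^sup>2 * Mm + alp\<^sup>2 * Mp" using M Mp0 by simp
    have "3 * R / (4 * c\<^sup>2) \<le> R / c\<^sup>2" if "0 \<le> R" for R using c that by (simp add: field_simps)
    thus ?thesis using R0 by blast
  qed
  finally show ?thesis unfolding a_def b_def .
qed


lemma meas_split:
  assumes fm: "finite_measure \<rho>" and s: "sets \<rho> = sets borel"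
  shows "measure \<rho> (dy I) = measure \<rho> (dy (dleft I)) + measure \<rho> (dy (dright I))"
proof -
  have "measure \<rho> (dy I) = measure \<rho> (dy (dleft I) \<union> dy (dright I))" using dy_split[of I] by simp
  also have "\<dots> = measure \<rho> (dy (dleft I)) + measure \<rho> (dy (dright I))"
    using finite_measure.finite_measure_Union[OF fm] dy_disj_children[of I] s dy_borel by simp
  finally show ?thesis .
qed

lemma psi_pw:
  "indicator (dy I) x * psi (Tmap I x) =
     -(1/2) * (indicator (dy (dleft I)) x * tent (Tmap (dleft I) x))
     + (1/2) * (indicator (dy (dright I)) x * tent (Tmap (dright I) x))"
proof -
  obtain k j where I: "I = (k,j)" by fastforce
  have p: "(0::real) < 2^k" by simp
  show ?thesis
  proof (cases "x \<in> dy (dleft I)")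
    case True
    have xI: "x \<in> dy I" using True dy_child_sub by blast
    have xr: "x \<notin> dy (dright I)" using True dy_disj_children by blast
    from True have "x \<in> dy (Suc k, 2*j)" unfolding I dleft.simps .
    hence "\<lfloor>2^Suc k * x\<rfloor> = int (2*j)" by (simp only: mem_dy)
    hence "2^Suc k * x < real (2*j) + 1" by (simp add: floor_eq_iff)
    hence lt: "Tmap I x < 1/2" using I by simp
    have "Tmap (dleft I) x = 2 * Tmap I x" using I by (simp add: algebra_simps)
    thus ?thesis using xI xr True lt unfolding psi_def by simp
  next
    case False
    show ?thesis
    proof (cases "x \<in> dy (dright I)")
      case True
      have xI: "x \<in> dy I" using True dy_child_sub by blast
      from True have "x \<in> dy (Suc k, 2*j+1)" unfolding I dright.simps .
      hence "\<lfloor>2^Suc k * x\<rfloor> = int (2*j+1)" by (simp only: mem_dy)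
      hence "real (2*j+1) \<le> 2^Suc k * x" by (simp add: floor_eq_iff)
      hence ge: "\<not> Tmap I x < 1/2" using I by simp
      have "Tmap (dright I) x = 2 * Tmap I x - 1" using I by (simp add: algebra_simps)
      thus ?thesis using xI False True ge unfolding psi_def by simp
    next
      case False2: False
      have "x \<notin> dy I" using False False2 dy_split[of I] by blast
      thus ?thesis using False False2 by simp
    qed
  qed
qed

lemma tent_meas: "tent \<in> borel_measurable borel" using PS_meas tent_PS by blast
lemma psi_meas: "psi \<in> borel_measurable borel" using PS_meas psi_PS by blast
lemma tent_abs: "\<bar>tent t\<bar> \<le> 1" using tent_bounds[of t] by simp

lemma PP_psi:
  assumes fm: "finite_measure \<rho>" and s: "sets \<rho> = sets borel"
  shows "PP \<rho> I psi = - PP \<rho> (dleft I) tent / 2 + PP \<rho> (dright I) tent / 2"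
proof -
  note i1 = PP_integrable[OF fm s tent_meas tent_abs, of "dleft I"]
  note i2 = PP_integrable[OF fm s tent_meas tent_abs, of "dright I"]
  have "PP \<rho> I psi = integral\<^sup>L \<rho> (\<lambda>x. -(1/2) * (indicator (dy (dleft I)) x * tent (Tmap (dleft I) x))
     + (1/2) * (indicator (dy (dright I)) x * tent (Tmap (dright I) x)))"
    unfolding PP_def by (rule Bochner_Integration.integral_cong[OF refl]) (rule psi_pw)
  also have "\<dots> = -(1/2) * PP \<rho> (dleft I) tent + (1/2) * PP \<rho> (dright I) tent"
  proof -
    have j1: "integrable \<rho> (\<lambda>x. -(1/2) * (indicator (dy (dleft I)) x * tent (Tmap (dleft I) x)))"
      using i1 by (rule integrable_mult_right)
    have j2: "integrable \<rho> (\<lambda>x. (1/2) * (indicator (dy (dright I)) x * tent (Tmap (dright I) x)))"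
      using i2 by (rule integrable_mult_right)
    show ?thesis unfolding PP_def Bochner_Integration.integral_add[OF j1 j2] by simp
  qed
  finally show ?thesis by simp
qed

lemma blow_psi:
  assumes fm: "finite_measure \<rho>" and s: "sets \<rho> = sets borel"
  shows "integral\<^sup>L (blowup \<rho> I) psi = (- PP \<rho> (dleft I) tent / 2 + PP \<rho> (dright I) tent / 2) / measure \<rho> (dy I)"
  using blowup_integral[OF s psi_meas] PP_psi[OF fm s] by simp

lemma key:
  assumes fmu: "finite_measure \<mu>" and su: "sets \<mu> = sets borel"
    and fnu: "finite_measure \<nu>" and sn: "sets \<nu> = sets borel"
    and c: "0 < c"
    and np: "0 < measure \<nu> (dy (dleft I))" "0 < measure \<nu> (dy (dright I))"
    and ql: "c * measure \<nu> (dy (dleft I)) \<le> PP \<nu> (dleft I) tent"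
            "c * measure \<nu> (dy (dright I)) \<le> PP \<nu> (dright I) tent"
  shows "(Delta \<mu> \<nu> I)\<^sup>2 * measure \<mu> (dy I) \<le>
     (4 * (alpha \<mu> \<nu> I)\<^sup>2 * measure \<mu> (dy I) + (alpha \<mu> \<nu> (dleft I))\<^sup>2 * measure \<mu> (dy (dleft I))
       + (alpha \<mu> \<nu> (dright I))\<^sup>2 * measure \<mu> (dy (dright I))) / c\<^sup>2"
proof -
  note ap = alpha_props[OF fmu su fnu sn]
  have t01: "\<And>t. 0 \<le> tent t \<and> tent t \<le> 1" by (rule tent_bounds)
  have pbl: "0 \<le> PP \<mu> (dleft I) tent" "PP \<mu> (dleft I) tent \<le> measure \<mu> (dy (dleft I))"
    using PP_bounds[OF fmu su tent_meas t01, of "dleft I"] by auto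
  have pbr: "0 \<le> PP \<mu> (dright I) tent" "PP \<mu> (dright I) tent \<le> measure \<mu> (dy (dright I))"
    using PP_bounds[OF fmu su tent_meas t01, of "dright I"] by auto
  have h0: "\<bar>(- PP \<mu> (dleft I) tent / 2 + PP \<mu> (dright I) tent / 2) / measure \<mu> (dy I)
      - (- PP \<nu> (dleft I) tent / 2 + PP \<nu> (dright I) tent / 2) / measure \<nu> (dy I)\<bar> \<le> alpha \<mu> \<nu> I"
    using ap(1)[OF psi_PS, of I] unfolding Wset_def blow_psi[OF fmu su] blow_psi[OF fnu sn] .
  have hm: "\<bar>PP \<mu> (dleft I) tent / measure \<mu> (dy (dleft I)) - PP \<nu> (dleft I) tent / measure \<nu> (dy (dleft I))\<bar>
      \<le> alpha \<mu> \<nu> (dleft I)"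
    using ap(1)[OF tent_PS, of "dleft I"] unfolding Wset_def blowup_integral[OF su tent_meas] blowup_integral[OF sn tent_meas] .
  have hp: "\<bar>PP \<mu> (dright I) tent / measure \<mu> (dy (dright I)) - PP \<nu> (dright I) tent / measure \<nu> (dy (dright I))\<bar>
      \<le> alpha \<mu> \<nu> (dright I)"
    using ap(1)[OF tent_PS, of "dright I"] unfolding Wset_def blowup_integral[OF su tent_meas] blowup_integral[OF sn tent_meas] .
  show ?thesis unfolding Delta_def
    by (rule alg[OF meas_split[OF fmu su] _ _ meas_split[OF fnu sn] np pbl pbr ql c h0 hm hp]) simp_all
qed




declare dy.simps[simp del]

lemma ps_fm: "prob_space M \<Longrightarrow> finite_measure M"
  unfolding prob_space_def by blast

lemma nu_facts:
  assumes ps: "prob_space \<nu>" and s: "sets \<nu> = sets borel" and one: "emeasure \<nu> {0..<1} = 1"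
    and dd: "dyadic_doubling D \<nu>"
  shows "1 \<le> D" and "\<And>I. I \<in> dyadic \<Longrightarrow> 0 < measure \<nu> (dy I)"
proof -
  note fm = ps_fm[OF ps]
  have dd': "\<And>I. I \<in> dyadic \<Longrightarrow> I \<noteq> (0,0) \<Longrightarrow> measure \<nu> (dy (dparent I)) \<le> D * measure \<nu> (dy I)"
    using dd unfolding dyadic_doubling_def by blast
  have top1: "measure \<nu> (dy (0,0)) = 1"
  proof -
    have "dy (0,0) = {0..<1}" by (simp add: dy.simps)
    hence "emeasure \<nu> (dy (0,0)) = 1" using one by simp
    thus ?thesis using finite_measure.emeasure_eq_measure[OF fm] by simp
  qed
  have le1: "measure \<nu> A \<le> 1" for A using prob_space.prob_le_1[OF ps] .
  have "measure \<nu> (dy (dparent (1,0))) \<le> D * measure \<nu> (dy (1,0))"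
    by (rule dd') (auto simp: dyadic_def)
  hence "1 \<le> D * measure \<nu> (dy (1,0))" using top1 by simp
  moreover have "D * measure \<nu> (dy (1,0)) \<le> max D 0"
  proof (cases "0 \<le> D")
    case True
    thus ?thesis using mult_left_mono[OF le1[of "dy (1,0)"] True] by simp
  next
    case False
    thus ?thesis using mult_nonpos_nonneg[of D "measure \<nu> (dy (1,0))"] by simp
  qed
  ultimately show D1: "1 \<le> D" by linarith
  have pos: "\<forall>j. (k,j) \<in> dyadic \<longrightarrow> 0 < measure \<nu> (dy (k,j))" for k
  proof (induction k)
    case 0
    show ?case using top1 by (auto simp: dyadic_def)
  next
    case (Suc k)
    show ?case
    proof (intro allI impI)
      fix j assume j: "(Suc k, j) \<in> dyadic"
      have "(k, j div 2) \<in> dyadic" using j unfolding dyadic_def by auto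
      hence p: "0 < measure \<nu> (dy (k, j div 2))" using Suc by blast
      have "measure \<nu> (dy (dparent (Suc k, j))) \<le> D * measure \<nu> (dy (Suc k, j))"
        by (rule dd'[OF j]) simp
      hence "0 < D * measure \<nu> (dy (Suc k, j))" using p by simp
      thus "0 < measure \<nu> (dy (Suc k, j))" using D1 by (simp add: zero_less_mult_iff)
    qed
  qed
  show "\<And>I. I \<in> dyadic \<Longrightarrow> 0 < measure \<nu> (dy I)" using pos by fastforce
qed

lemma tent_low_pw:
  "(1/4) * indicator (dy (Suc (Suc k), 4*j+1)) x \<le> indicator (dy (k,j)) x * tent (Tmap (k,j) x)"
proof (cases "x \<in> dy (Suc (Suc k), 4*j+1)")
  case True
  have sub: "dy (Suc (Suc k), 4*j+1) \<subseteq> dy (k,j)"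
    by (rule dy_sub) auto
  have "\<lfloor>2^Suc (Suc k) * x\<rfloor> = int (4*j+1)" using True by (simp only: mem_dy)
  hence "real (4*j+1) \<le> 2^Suc (Suc k) * x" "2^Suc (Suc k) * x < real (4*j+1) + 1"
    by (simp_all add: floor_eq_iff)
  hence "1/4 \<le> 2^k * x - real j" "2^k * x - real j < 1/2" by simp_all
  hence "1/4 \<le> tent (Tmap (k,j) x)" unfolding tent_def by simp
  thus ?thesis using True sub by auto
next
  case False thus ?thesis using tent_bounds by simp
qed

lemma tent_low:
  assumes ps: "prob_space \<nu>" and s: "sets \<nu> = sets borel" and one: "emeasure \<nu> {0..<1} = 1"
    and dd: "dyadic_doubling D \<nu>" and J: "J \<in> dyadic"
  shows "1 / (4 * D\<^sup>2) * measure \<nu> (dy J) \<le> PP \<nu> J tent"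
proof -
  note fm = ps_fm[OF ps]
  note nf = nu_facts[OF ps s one dd]
  obtain k j where Jk: "J = (k,j)" by fastforce
  define G where "G = (Suc (Suc k), 4*j+1)"
  have dd': "\<And>I. I \<in> dyadic \<Longrightarrow> I \<noteq> (0,0) \<Longrightarrow> measure \<nu> (dy (dparent I)) \<le> D * measure \<nu> (dy I)"
    using dd unfolding dyadic_doubling_def by blast
  have jk: "j < 2^k" using J Jk unfolding dyadic_def by auto
  have Gd: "G \<in> dyadic" unfolding G_def dyadic_def using jk by auto
  have Hd: "(Suc k, 2*j) \<in> dyadic" unfolding dyadic_def using jk by auto
  have "measure \<nu> (dy (dparent G)) \<le> D * measure \<nu> (dy G)" by (rule dd'[OF Gd]) (simp add: G_def)
  moreover have "dparent G = (Suc k, 2*j)" unfolding G_def by simp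
  ultimately have a1: "measure \<nu> (dy (Suc k, 2*j)) \<le> D * measure \<nu> (dy G)" by simp
  have "measure \<nu> (dy (dparent (Suc k, 2*j))) \<le> D * measure \<nu> (dy (Suc k, 2*j))" by (rule dd'[OF Hd]) simp
  hence a2: "measure \<nu> (dy J) \<le> D * measure \<nu> (dy (Suc k, 2*j))" using Jk by simp
  have D0: "0 < D" using nf(1) by simp
  have "measure \<nu> (dy J) \<le> D * (D * measure \<nu> (dy G))"
    using a2 mult_left_mono[OF a1, of D] D0 by linarith
  hence m: "measure \<nu> (dy J) / D\<^sup>2 \<le> measure \<nu> (dy G)" using D0
    by (simp add: divide_le_eq power2_eq_square mult.assoc mult.commute mult.left_commute)
  have "(1/4) * measure \<nu> (dy G) \<le> PP \<nu> J tent"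
  proof -
    have "integral\<^sup>L \<nu> (\<lambda>x. (1/4) * indicator (dy G) x) \<le> PP \<nu> J tent"
      unfolding PP_def
      by (rule integral_mono[OF ind_integrable[OF fm s] PP_integrable[OF fm s tent_meas tent_abs]])
        (use tent_low_pw in \<open>simp add: G_def Jk\<close>)
    thus ?thesis using space_rho[OF s] by simp
  qed
  moreover have "1 / (4 * D\<^sup>2) * measure \<nu> (dy J) = (1/4) * (measure \<nu> (dy J) / D\<^sup>2)" by simp
  ultimately show ?thesis using m by linarith
qed




lemma ennreal_cmult_le:
  "(\<Sum>\<^sub>\<infinity>x\<in>A. (c::ennreal) * f x) \<le> c * (\<Sum>\<^sub>\<infinity>x\<in>A. f x)"
proof (rule infsum_le_finite_sums)
  show "(\<lambda>x. c * f x) summable_on A" by (rule nonneg_summable_on_complete) simp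
  fix F assume F: "finite F" "F \<subseteq> A"
  have "sum f F = (\<Sum>\<^sub>\<infinity>x\<in>F. f x)" using F by simp
  also have "\<dots> \<le> (\<Sum>\<^sub>\<infinity>x\<in>A. f x)"
    by (rule infsum_mono_neutral) (use F in \<open>auto intro: nonneg_summable_on_complete\<close>)
  finally have "sum f F \<le> (\<Sum>\<^sub>\<infinity>x\<in>A. f x)" .
  thus "(\<Sum>x\<in>F. c * f x) \<le> c * (\<Sum>\<^sub>\<infinity>x\<in>A. f x)"
    by (simp add: sum_distrib_left[symmetric] mult_left_mono)
qed

lemma ennreal_summable: "(f::'a \<Rightarrow> ennreal) summable_on A"
  by (rule nonneg_summable_on_complete) simp

lemma enn_conv:
  fixes x a b b' K :: real
  assumes "0 \<le> a" "0 \<le> b" "0 \<le> b'" "0 \<le> K" "x \<le> K * (4*a + b + b')"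
  shows "ennreal x \<le> ennreal K * (4 * ennreal a + ennreal b + ennreal b')"
proof -
  have "ennreal x \<le> ennreal (K * (4*a + b + b'))" using assms(5) by (rule ennreal_leI)
  also have "\<dots> = ennreal K * (4 * ennreal a + ennreal b + ennreal b')"
    using assms by (simp add: ennreal_mult ennreal_plus[symmetric])
  finally show ?thesis .
qed

lemma dyadic_children: "I \<in> dyadic \<Longrightarrow> dleft I \<in> dyadic \<and> dright I \<in> dyadic"
  by (cases I) (auto simp: dyadic_def)

lemma dleft_ne_dright: "dleft I \<noteq> dright J"
proof -
  obtain k j k' j' where "I = (k,j)" "J = (k',j')" by fastforce
  moreover have "2*j \<noteq> 2*j'+(1::nat)" by presburger
  ultimately show ?thesis by simp
qed

lemma inj_dright: "inj_on dright A"
proof -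
  have "dright I = dright J \<Longrightarrow> I = J" for I J by (cases I, cases J) auto
  thus ?thesis unfolding inj_on_def by blast
qed
lemma inj_dleft': "inj_on dleft A"
proof -
  have "dleft I = dleft J \<Longrightarrow> I = J" for I J by (cases I, cases J) auto
  thus ?thesis unfolding inj_on_def by blast
qed

lemma CT_parent:
  assumes tr: "is_tree T" and J: "J \<in> (dleft ` T \<union> dright ` T) - T"
  shows "\<exists>L\<in>leaves T. J = dleft L \<or> J = dright L"
proof -
  have ch: "\<forall>I\<in>T. (dleft I \<in> T \<and> dright I \<in> T) \<or> (dleft I \<notin> T \<and> dright I \<notin> T)"
    using tr unfolding is_tree_def by blast
  obtain I where I: "I \<in> T" "J = dleft I \<or> J = dright I" using J by blast
  hence "dleft I \<notin> T \<and> dright I \<notin> T" using ch J by blast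
  hence "I \<in> leaves T" using I unfolding leaves_def by blast
  thus ?thesis using I by blast
qed

lemma CT_disj:
  assumes tr: "is_tree T"
  shows "disjoint_family_on dy ((dleft ` T \<union> dright ` T) - T)"
  unfolding disjoint_family_on_def
proof (intro ballI impI)
  fix J1 J2 assume J1: "J1 \<in> (dleft ` T \<union> dright ` T) - T" and J2: "J2 \<in> (dleft ` T \<union> dright ` T) - T"
    and ne: "J1 \<noteq> J2"
  obtain L1 where L1: "L1 \<in> leaves T" "J1 = dleft L1 \<or> J1 = dright L1" using CT_parent[OF tr J1] by blast
  obtain L2 where L2: "L2 \<in> leaves T" "J2 = dleft L2 \<or> J2 = dright L2" using CT_parent[OF tr J2] by blast
  have s1: "dy J1 \<subseteq> dy L1" using L1(2) dy_child_sub by blast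
  have s2: "dy J2 \<subseteq> dy L2" using L2(2) dy_child_sub by blast
  show "dy J1 \<inter> dy J2 = {}"
  proof (cases "L1 = L2")
    case True
    then have "(J1 = dleft L1 \<and> J2 = dright L1) \<or> (J1 = dright L1 \<and> J2 = dleft L1)" using L1 L2 ne by auto
    thus ?thesis using dy_disj_children[of L1] by blast
  next
    case False
    thus ?thesis using leaves_disj[OF tr L1(1) L2(1) False] s1 s2 by blast
  qed
qed

lemma leaves_disj_family: "is_tree T \<Longrightarrow> disjoint_family_on dy (leaves T)"
  unfolding disjoint_family_on_def using leaves_disj by blast

theorem mainTheorem6:
  fixes D\<^sub>\<nu> D :: real
  assumes "D \<ge> 1"
  shows "\<exists>C::real. \<forall>(\<mu>::real measure) (\<nu>::real measure) T.
    prob_space \<mu> \<and> sets \<mu> = sets borel \<and> emeasure \<mu> {0..<1} = 1 \<and>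
    prob_space \<nu> \<and> sets \<nu> = sets borel \<and> emeasure \<nu> {0..<1} = 1 \<and>
    (\<forall>k j::nat. measure \<mu> {real j / 2 ^ k} = 0) \<and>
    dyadic_doubling D\<^sub>\<nu> \<nu> \<and>
    is_tree T \<and> tree_doubling T D \<mu>
    \<longrightarrow>
    (\<Sum>\<^sub>\<infinity>I\<in>T. ennreal ((Delta \<mu> \<nu> I)\<^sup>2 * measure \<mu> (dy I)))
      \<le> ennreal C * ((\<Sum>\<^sub>\<infinity>I\<in>T - leaves T. ennreal ((alpha \<mu> \<nu> I)\<^sup>2 * measure \<mu> (dy I)))
                      + ennreal (measure \<mu> (dy (tree_top T))))"
proof (rule exI[of _ "1536 * D\<^sub>\<nu>^4"], intro allI impI, elim conjE)
  fix \<mu> \<nu> :: "real measure" and T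
  assume psu: "prob_space \<mu>" and su: "sets \<mu> = sets borel"
    and psn: "prob_space \<nu>" and sn: "sets \<nu> = sets borel" and onen: "emeasure \<nu> {0..<1} = 1"
    and dd: "dyadic_doubling D\<^sub>\<nu> \<nu>" and tr: "is_tree T"
  note fmu = ps_fm[OF psu] and fmn = ps_fm[OF psn]
  note nf = nu_facts[OF psn sn onen dd]
  define Dn where "Dn = D\<^sub>\<nu>"
  have D1: "1 \<le> Dn" using nf(1) Dn_def by simp
  have Tsub: "T \<subseteq> dyadic" using tr unfolding is_tree_def by blast
  define Top where "Top = tree_top T"
  have TopT: "Top \<in> T" and TopS: "\<And>I. I \<in> T \<Longrightarrow> dy I \<subseteq> dy Top"
    using tree_top_props[OF tr] Top_def by auto
  define M where "M J = measure \<mu> (dy J)" for J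
  define f where "f J = ennreal ((alpha \<mu> \<nu> J)\<^sup>2 * M J)" for J
  define c where "c = 1 / (4 * Dn\<^sup>2)"
  define K where "K = 16 * Dn^4"
  have c0: "0 < c" unfolding c_def using D1 by simp
  have Kc: "1 / c\<^sup>2 = K" unfolding c_def K_def using D1 by (simp add: power_divide field_simps power2_eq_square eval_nat_numeral)
  have K0: "0 \<le> K" unfolding K_def by simp
  note ap = alpha_props[OF fmu su fmn sn]
  have fle: "f J \<le> 16 * ennreal (M J)" for J
  proof -
    have a: "0 \<le> alpha \<mu> \<nu> J" "alpha \<mu> \<nu> J \<le> 4" using ap(2,3) by auto
    have "(alpha \<mu> \<nu> J)\<^sup>2 \<le> 4\<^sup>2" using a by (intro power_mono) auto
    hence "(alpha \<mu> \<nu> J)\<^sup>2 * M J \<le> 16 * M J" unfolding M_def by (intro mult_right_mono) auto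
    hence "f J \<le> ennreal (16 * M J)" unfolding f_def by (rule ennreal_leI)
    thus ?thesis unfolding M_def by (simp add: ennreal_mult)
  qed
  have pw: "ennreal ((Delta \<mu> \<nu> I)\<^sup>2 * M I) \<le> ennreal K * (4 * f I + f (dleft I) + f (dright I))"
    if I: "I \<in> T" for I
  proof -
    have Id: "I \<in> dyadic" using I Tsub by blast
    have chd: "dleft I \<in> dyadic" "dright I \<in> dyadic" using dyadic_children[OF Id] by auto
    have ql: "c * measure \<nu> (dy (dleft I)) \<le> PP \<nu> (dleft I) tent"
             "c * measure \<nu> (dy (dright I)) \<le> PP \<nu> (dright I) tent"
      unfolding c_def Dn_def using tent_low[OF psn sn onen dd chd(1)] tent_low[OF psn sn onen dd chd(2)] by auto
    have kk: "(Delta \<mu> \<nu> I)\<^sup>2 * M I \<le>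
      (4 * (alpha \<mu> \<nu> I)\<^sup>2 * M I + (alpha \<mu> \<nu> (dleft I))\<^sup>2 * M (dleft I)
       + (alpha \<mu> \<nu> (dright I))\<^sup>2 * M (dright I)) / c\<^sup>2"
      unfolding M_def by (rule key[OF fmu su fmn sn c0 nf(2)[OF chd(1)] nf(2)[OF chd(2)] ql])
    also have "\<dots> = K * (4 * ((alpha \<mu> \<nu> I)\<^sup>2 * M I) + (alpha \<mu> \<nu> (dleft I))\<^sup>2 * M (dleft I)
       + (alpha \<mu> \<nu> (dright I))\<^sup>2 * M (dright I))"
      using Kc by (simp add: divide_inverse mult.commute mult.left_commute)
    finally show ?thesis unfolding f_def by (rule enn_conv[rotated 4]) (auto simp: M_def K0)
  qed
  define L where "L = leaves T"
  define CC where "CC = dleft ` T \<union> dright ` T"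
  define t where "t = ennreal (M Top)"
  define S where "S = (\<Sum>\<^sub>\<infinity>I\<in>T - L. f I)"
  define ST where "ST = (\<Sum>\<^sub>\<infinity>I\<in>T. f I)"
  have LT: "L \<subseteq> T" unfolding L_def leaves_def by blast
  have sumM: "(\<Sum>\<^sub>\<infinity>I\<in>F. f I) \<le> 16 * t" if F: "\<And>I. I \<in> F \<Longrightarrow> dy I \<subseteq> dy Top" and dj: "disjoint_family_on dy F" for F
  proof -
    have "(\<Sum>\<^sub>\<infinity>I\<in>F. f I) \<le> (\<Sum>\<^sub>\<infinity>I\<in>F. 16 * ennreal (M I))"
      by (rule infsum_mono[OF ennreal_summable ennreal_summable]) (rule fle)
    also have "\<dots> \<le> 16 * (\<Sum>\<^sub>\<infinity>I\<in>F. ennreal (M I))" by (rule ennreal_cmult_le)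
    also have "(\<Sum>\<^sub>\<infinity>I\<in>F. ennreal (M I)) \<le> t"
      unfolding M_def t_def by (rule disj_sum_le[OF fmu su F dj dy_borel])
    hence "16 * (\<Sum>\<^sub>\<infinity>I\<in>F. ennreal (M I)) \<le> 16 * t" by (rule mult_left_mono) simp
    finally show ?thesis .
  qed
  have S5: "ST \<le> S + 16 * t"
  proof -
    have "T = (T - L) \<union> L" using LT by blast
    hence "ST = S + (\<Sum>\<^sub>\<infinity>I\<in>L. f I)" unfolding ST_def S_def
      by (metis Diff_disjoint inf_commute infsum_Un_disjoint ennreal_summable)
    moreover have "(\<Sum>\<^sub>\<infinity>I\<in>L. f I) \<le> 16 * t"
      by (rule sumM) (use LT TopS leaves_disj_family[OF tr] L_def in auto)
    ultimately show ?thesis by (simp add: add_left_mono)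
  qed
  have S4: "(\<Sum>\<^sub>\<infinity>I\<in>CC. f I) \<le> ST + 16 * t"
  proof -
    have "CC = (CC \<inter> T) \<union> (CC - T)" by blast
    hence "(\<Sum>\<^sub>\<infinity>I\<in>CC. f I) = (\<Sum>\<^sub>\<infinity>I\<in>CC \<inter> T. f I) + (\<Sum>\<^sub>\<infinity>I\<in>CC - T. f I)"
      by (metis Diff_disjoint inf_assoc inf_commute infsum_Un_disjoint ennreal_summable Int_Diff_disjoint)
    moreover have "(\<Sum>\<^sub>\<infinity>I\<in>CC \<inter> T. f I) \<le> ST" unfolding ST_def
      by (rule infsum_mono_neutral[OF ennreal_summable ennreal_summable]) auto
    moreover have "(\<Sum>\<^sub>\<infinity>I\<in>CC - T. f I) \<le> 16 * t"
    proof (rule sumM)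
      fix J assume J: "J \<in> CC - T"
      obtain L' where "L' \<in> leaves T" "J = dleft L' \<or> J = dright L'" using CT_parent[OF tr] J CC_def by blast
      thus "dy J \<subseteq> dy Top" using TopS dy_child_sub unfolding leaves_def by blast
    next
      show "disjoint_family_on dy (CC - T)" unfolding CC_def by (rule CT_disj[OF tr])
    qed
    ultimately show ?thesis by (simp add: add_mono)
  qed
  have S3: "(\<Sum>\<^sub>\<infinity>I\<in>T. f (dleft I)) + (\<Sum>\<^sub>\<infinity>I\<in>T. f (dright I)) = (\<Sum>\<^sub>\<infinity>I\<in>CC. f I)"
  proof -
    have "(\<Sum>\<^sub>\<infinity>I\<in>T. f (dleft I)) = (\<Sum>\<^sub>\<infinity>I\<in>dleft ` T. f I)"
      using infsum_reindex[OF inj_dleft', of f T] by (simp add: comp_def)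
    moreover have "(\<Sum>\<^sub>\<infinity>I\<in>T. f (dright I)) = (\<Sum>\<^sub>\<infinity>I\<in>dright ` T. f I)"
      using infsum_reindex[OF inj_dright, of f T] by (simp add: comp_def)
    moreover have "dleft ` T \<inter> dright ` T = {}" using dleft_ne_dright by blast
    ultimately show ?thesis unfolding CC_def
      by (simp add: infsum_Un_disjoint ennreal_summable)
  qed
  have "(\<Sum>\<^sub>\<infinity>I\<in>T. ennreal ((Delta \<mu> \<nu> I)\<^sup>2 * M I))
      \<le> (\<Sum>\<^sub>\<infinity>I\<in>T. ennreal K * (4 * f I + f (dleft I) + f (dright I)))"
    by (rule infsum_mono[OF ennreal_summable ennreal_summable]) (rule pw)
  also have "\<dots> \<le> ennreal K * (\<Sum>\<^sub>\<infinity>I\<in>T. 4 * f I + f (dleft I) + f (dright I))"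
    by (rule ennreal_cmult_le)
  also have "(\<Sum>\<^sub>\<infinity>I\<in>T. 4 * f I + f (dleft I) + f (dright I))
      = (\<Sum>\<^sub>\<infinity>I\<in>T. 4 * f I) + (\<Sum>\<^sub>\<infinity>I\<in>T. f (dleft I)) + (\<Sum>\<^sub>\<infinity>I\<in>T. f (dright I))"
    by (simp add: infsum_add ennreal_summable)
  also have "\<dots> \<le> 4 * ST + (ST + 16 * t)"
  proof -
    have "(\<Sum>\<^sub>\<infinity>I\<in>T. 4 * f I) \<le> 4 * ST" unfolding ST_def by (rule ennreal_cmult_le)
    thus ?thesis using S3 S4 by (simp add: add.assoc add_mono)
  qed
  also have "\<dots> \<le> 4 * (S + 16 * t) + ((S + 16 * t) + 16 * t)"
    using S5 by (intro add_mono mult_left_mono) auto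
  also have "\<dots> \<le> 96 * (S + t)"
  proof -
    have a: "(5::ennreal) = 1 + 4" by simp
    have b: "(96::ennreal) = 16 + 16 + 64" by simp
    have "4 * (S + 16 * t) + ((S + 16 * t) + 16 * t) = S + (S * 4 + (t * 16 + (t * 16 + t * 64)))"
      by (simp add: algebra_simps)
    also have "\<dots> = S * 5 + t * 96" unfolding a b by (simp only: distrib_left add_ac mult_1_right)
    finally have "4 * (S + 16 * t) + ((S + 16 * t) + 16 * t) = 5 * S + 96 * t" by (simp add: mult.commute)
    also have "\<dots> \<le> 96 * S + 96 * t" by (intro add_mono mult_right_mono) auto
    also have "\<dots> = 96 * (S + t)" by (simp add: algebra_simps)
    finally show ?thesis .
  qed
  finally have fin: "(\<Sum>\<^sub>\<infinity>I\<in>T. ennreal ((Delta \<mu> \<nu> I)\<^sup>2 * M I)) \<le> ennreal K * (96 * (S + t))"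
    by (simp add: mult_left_mono)
  have "ennreal K * (96 * (S + t)) = ennreal (1536 * D\<^sub>\<nu>^4) * (S + t)"
  proof -
    have "ennreal (1536 * D\<^sub>\<nu>^4) = ennreal K * 96"
    proof -
      have d4: "0 \<le> 16 * D\<^sub>\<nu>^4" by simp
      have "ennreal (16 * D\<^sub>\<nu>^4 * 96) = ennreal (16 * D\<^sub>\<nu>^4) * ennreal 96"
        by (rule ennreal_mult[OF d4]) simp
      moreover have "16 * D\<^sub>\<nu>^4 * 96 = 1536 * D\<^sub>\<nu>^4" by simp
      ultimately show ?thesis unfolding K_def Dn_def by simp
    qed
    thus ?thesis by (simp add: mult.assoc)
  qed
  thus "(\<Sum>\<^sub>\<infinity>I\<in>T. ennreal ((Delta \<mu> \<nu> I)\<^sup>2 * measure \<mu> (dy I)))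
      \<le> ennreal (1536 * D\<^sub>\<nu>^4) * ((\<Sum>\<^sub>\<infinity>I\<in>T - leaves T. ennreal ((alpha \<mu> \<nu> I)\<^sup>2 * measure \<mu> (dy I)))
                      + ennreal (measure \<mu> (dy (tree_top T))))"
    using fin unfolding S_def f_def M_def t_def L_def Top_def by simp
qed



end
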